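(* Let $\mathcal{H}$ and $\mathcal{K}$ be finite-dimensional complex Hilbert spaces with $\dim\mathcal{H}\ge 2$. Let $\mathcal{HP}$ be the set of all Hermitian-preserving trace-preserving linear maps $B(\mathcal{H})\to B(\mathcal{K})$, and $\mathcal{SP},\mathcal{SN}\subseteq\mathcal{HP}$ the subsets of SP and SN maps. Then $\operatorname{Conv}(\mathcal{SP})=\operatorname{Conv}(\mathcal{SN})=\mathcal{HP}$, where $\operatorname{Conv}$ denotes the convex hull.
   Context: $B(\mathcal{H})$ denotes all linear operators on $\mathcal{H}$; a density matrix is a positive semidefinite operator of trace one. A map is Hermitian-preserving if $\Psi(X^\dagger)=\Psi(X)^\dagger$ and trace-preserving if $\operatorname{Tr}\Psi(X)=\operatorname{Tr}X$. An HPTP map $\Psi$ is SP if there is an invertible density matrix $\rho\in B(\mathcal{H})$ such that $\Psi(\rho)$ is an invertible density matrix; it is SN if there is a density matrix $\rho$ such that $\Psi(\rho)$ is a density matrix. *)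

theory Defs
  imports "HOL-Analysis.Analysis"
begin

text \<open>B(H) for H = C^'n is modelled as complex^'n^'n (operators as matrices).\<close>

definition cmat_scale :: "complex \<Rightarrow> complex^'n^'n \<Rightarrow> complex^'n^'n" where
  "cmat_scale c A = (\<chi> i j. c * A$i$j)"

definition cmat_adj :: "complex^'n^'n \<Rightarrow> complex^'n^'n" where
  "cmat_adj A = (\<chi> i j. cnj (A$j$i))"

definition complex_linear_map :: "(complex^'n^'n \<Rightarrow> complex^'m^'m) \<Rightarrow> bool" where
  "complex_linear_map f \<longleftrightarrow>
     (\<forall>A B. f (A + B) = f A + f B) \<and> (\<forall>c A. f (cmat_scale c A) = cmat_scale c (f A))"

definition hermitian_preserving :: "(complex^'n^'n \<Rightarrow> complex^'m^'m) \<Rightarrow> bool" where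
  "hermitian_preserving f \<longleftrightarrow> (\<forall>X. f (cmat_adj X) = cmat_adj (f X))"

definition trace_preserving :: "(complex^'n^'n \<Rightarrow> complex^'m^'m) \<Rightarrow> bool" where
  "trace_preserving f \<longleftrightarrow> (\<forall>X. trace (f X) = trace X)"

definition psd :: "complex^'n^'n \<Rightarrow> bool" where
  "psd A \<longleftrightarrow> cmat_adj A = A \<and>
     (\<forall>v::complex^'n. 0 \<le> Re (\<Sum>i\<in>UNIV. cnj (v$i) * (A *v v)$i))"

definition density_matrix :: "complex^'n^'n \<Rightarrow> bool" where
  "density_matrix A \<longleftrightarrow> psd A \<and> trace A = 1"

definition HP :: "(complex^'n^'n \<Rightarrow> complex^'m^'m) set" where
  "HP = {f. complex_linear_map f \<and> hermitian_preserving f \<and> trace_preserving f}"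

definition SP :: "(complex^'n^'n \<Rightarrow> complex^'m^'m) set" where
  "SP = {f \<in> HP. \<exists>\<rho>. density_matrix \<rho> \<and> invertible \<rho> \<and>
                    density_matrix (f \<rho>) \<and> invertible (f \<rho>)}"

definition SN :: "(complex^'n^'n \<Rightarrow> complex^'m^'m) set" where
  "SN = {f \<in> HP. \<exists>\<rho>. density_matrix \<rho> \<and> density_matrix (f \<rho>)}"

definition Conv :: "('a \<Rightarrow> 'b::real_vector) set \<Rightarrow> ('a \<Rightarrow> 'b) set" where
  "Conv S = {f. \<exists>(k::nat) (c::nat \<Rightarrow> real) g.
     (\<forall>i<k. 0 \<le> c i \<and> g i \<in> S) \<and> (\<Sum>i<k. c i) = 1 \<and>
     f = (\<lambda>x. \<Sum>i<k. c i *\<^sub>R g i x)}"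

end

theory Submission
  imports Defs
begin

lemma trace_scaleR: "trace (r *\<^sub>R (A::complex^'n^'n)) = r *\<^sub>R trace A"
  by (simp add: trace_def scaleR_sum_right)

lemma trace_sum: "trace (\<Sum>i\<in>S. (A i::complex^'n^'n)) = (\<Sum>i\<in>S. trace (A i))"
  unfolding trace_def by (simp add: sum.swap[of _ S])

lemma cmat_scale_sum: "cmat_scale z (\<Sum>i\<in>S. (A i::complex^'n^'n)) = (\<Sum>i\<in>S. cmat_scale z (A i))"
  by (simp add: cmat_scale_def vec_eq_iff sum_distrib_left)

lemma cmat_scale_scaleR: "cmat_scale z (r *\<^sub>R (A::complex^'n^'n)) = r *\<^sub>R cmat_scale z A"
  by (simp add: cmat_scale_def vec_eq_iff scaleR_conv_of_real)

lemma cmat_adj_sum: "cmat_adj (\<Sum>i\<in>S. (A i::complex^'n^'n)) = (\<Sum>i\<in>S. cmat_adj (A i))"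
  by (simp add: cmat_adj_def vec_eq_iff)

lemma cmat_adj_scaleR: "cmat_adj (r *\<^sub>R (A::complex^'n^'n)) = r *\<^sub>R cmat_adj A"
  by (simp add: cmat_adj_def vec_eq_iff complex_cnj_scaleR)

lemma Conv_HP: "Conv (HP :: (complex^'n^'n \<Rightarrow> complex^'m^'m) set) \<subseteq> HP"
proof
  fix f :: "complex^'n^'n \<Rightarrow> complex^'m^'m"
  assume "f \<in> Conv HP"
  then obtain k and c :: "nat \<Rightarrow> real" and g :: "nat \<Rightarrow> complex^'n^'n \<Rightarrow> complex^'m^'m" where cg: "\<forall>i<k. 0 \<le> c i \<and> g i \<in> HP" and s1: "(\<Sum>i<k. c i) = 1"
    and f: "f = (\<lambda>x. \<Sum>i<k. c i *\<^sub>R g i x)" unfolding Conv_def by blast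
  have lin: "\<And>i. i < k \<Longrightarrow> complex_linear_map (g i)"
   and her: "\<And>i. i < k \<Longrightarrow> hermitian_preserving (g i)"
   and tp: "\<And>i. i < k \<Longrightarrow> trace_preserving (g i)" using cg by (auto simp: HP_def)
  have "complex_linear_map f"
    unfolding complex_linear_map_def f
  proof (intro conjI allI)
    fix A B show "(\<Sum>i<k. c i *\<^sub>R g i (A + B)) = (\<Sum>i<k. c i *\<^sub>R g i A) + (\<Sum>i<k. c i *\<^sub>R g i B)"
      using lin by (simp add: complex_linear_map_def sum.distrib[symmetric] scaleR_add_right)
  next
    fix z A show "(\<Sum>i<k. c i *\<^sub>R g i (cmat_scale z A)) = cmat_scale z (\<Sum>i<k. c i *\<^sub>R g i A)"
      using lin by (simp add: complex_linear_map_def cmat_scale_sum cmat_scale_scaleR)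
  qed
  moreover have "hermitian_preserving f"
    unfolding hermitian_preserving_def f
    using her by (simp add: hermitian_preserving_def cmat_adj_sum cmat_adj_scaleR)
  moreover have "trace_preserving f"
    unfolding trace_preserving_def f
  proof
    fix X
    have "trace (\<Sum>i<k. c i *\<^sub>R g i X) = (\<Sum>i<k. c i *\<^sub>R trace X)"
      using tp by (simp add: trace_sum trace_scaleR trace_preserving_def)
    also have "\<dots> = trace X" using s1 by (simp add: scaleR_sum_left[symmetric])
    finally show "trace (\<Sum>i<k. c i *\<^sub>R g i X) = trace X" .
  qed
  ultimately show "f \<in> HP" by (simp add: HP_def)
qed

lemma Conv_mono: "S \<subseteq> T \<Longrightarrow> Conv S \<subseteq> Conv T"
  unfolding Conv_def by blast

lemma cmat_scale_add: "cmat_scale c ((A::complex^'n^'n) + B) = cmat_scale c A + cmat_scale c B"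
  by (simp add: cmat_scale_def vec_eq_iff algebra_simps)
lemma cmat_adj_add: "cmat_adj ((A::complex^'n^'n) + B) = cmat_adj A + cmat_adj B"
  by (simp add: cmat_adj_def vec_eq_iff)
lemma cmat_adj_diff: "cmat_adj ((A::complex^'n^'n) - B) = cmat_adj A - cmat_adj B"
  by (simp add: cmat_adj_def vec_eq_iff)
lemma cmat_scale_diff: "cmat_scale c ((A::complex^'n^'n) - B) = cmat_scale c A - cmat_scale c B"
  by (simp add: cmat_scale_def vec_eq_iff algebra_simps)
lemma cmat_adj_scale: "cmat_adj (cmat_scale c (A::complex^'n^'n)) = cmat_scale (cnj c) (cmat_adj A)"
  by (simp add: cmat_scale_def cmat_adj_def vec_eq_iff)
lemma trace_cmat_scale: "trace (cmat_scale c (A::complex^'n^'n)) = c * trace A"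
  by (simp add: cmat_scale_def trace_def sum_distrib_left)
lemma trace_cmat_adj: "trace (cmat_adj (A::complex^'n^'n)) = cnj (trace A)"
  by (simp add: cmat_adj_def trace_def)
lemma cmat_scale_1: "cmat_scale 1 (A::complex^'n^'n) = A"
  by (simp add: cmat_scale_def vec_eq_iff)
lemma cmat_scale_0: "cmat_scale 0 (A::complex^'n^'n) = 0"
  by (simp add: cmat_scale_def vec_eq_iff)

lemma cmat_scale_addl: "cmat_scale (c + d) (A::complex^'n^'n) = cmat_scale c A + cmat_scale d A"
  by (simp add: cmat_scale_def vec_eq_iff algebra_simps)
lemma cmat_scale_mult: "cmat_scale (c * d) (A::complex^'n^'n) = cmat_scale c (cmat_scale d A)"
  by (simp add: cmat_scale_def vec_eq_iff algebra_simps)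

definition goodF :: "(complex^'n^'n \<Rightarrow> complex) \<Rightarrow> bool" where
  "goodF g \<longleftrightarrow> (\<forall>X Y. g (X+Y) = g X + g Y) \<and> (\<forall>c X. g (cmat_scale c X) = c * g X)
      \<and> (\<forall>X. g (cmat_adj X) = cnj (g X))"

lemma goodF_trace: "goodF trace"
  by (simp add: goodF_def trace_add trace_cmat_scale trace_cmat_adj)
lemma goodF_entry: "goodF (\<lambda>X. X$a$a)"
  by (simp add: goodF_def cmat_scale_def cmat_adj_def)
lemma goodF_add: "goodF f \<Longrightarrow> goodF g \<Longrightarrow> goodF (\<lambda>X. f X + g X)"
  by (simp add: goodF_def algebra_simps)
lemma goodF_diff: "goodF f \<Longrightarrow> goodF g \<Longrightarrow> goodF (\<lambda>X. f X - g X)"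
  by (simp add: goodF_def algebra_simps)
lemma goodF_real: "goodF f \<Longrightarrow> goodF (\<lambda>X. of_real r * f X)"
  by (simp add: goodF_def algebra_simps)

definition goodD :: "(complex^'n^'n \<Rightarrow> complex^'m^'m) \<Rightarrow> bool" where
  "goodD D \<longleftrightarrow> complex_linear_map D \<and> hermitian_preserving D \<and> (\<forall>X. trace (D X) = 0)"

lemma goodD_add: "goodD D1 \<Longrightarrow> goodD D2 \<Longrightarrow> goodD (\<lambda>X. D1 X + D2 X)"
  by (simp add: goodD_def complex_linear_map_def hermitian_preserving_def cmat_scale_add
      cmat_adj_add trace_add algebra_simps)

lemma goodD_rank1:
  assumes "goodF g" "cmat_adj A = A" "trace A = 0"
  shows "goodD (\<lambda>X. cmat_scale (g X) (A::complex^'m^'m))"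
proof -
  have "\<And>X Y. g (X+Y) = g X + g Y" "\<And>c X. g (cmat_scale c X) = c * g X" "\<And>X. g (cmat_adj X) = cnj (g X)"
    using assms(1) by (auto simp: goodF_def)
  then show ?thesis using assms(2,3)
    by (simp add: goodD_def complex_linear_map_def hermitian_preserving_def cmat_adj_scale
     trace_cmat_scale cmat_scale_addl cmat_scale_mult)
qed

lemma HP_plus:
  assumes "\<Psi> \<in> HP" "goodD D"
  shows "(\<lambda>X. \<Psi> X + D X) \<in> HP" "(\<lambda>X. \<Psi> X - D X) \<in> HP"
  using assms
  by (simp_all add: HP_def goodD_def complex_linear_map_def hermitian_preserving_def
      trace_preserving_def cmat_scale_add cmat_scale_diff cmat_adj_add cmat_adj_diff trace_add trace_sub)

definition diagm :: "('n \<Rightarrow> real) \<Rightarrow> complex^'n^'n" where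
  "diagm d = (\<chi> i j. if i = j then complex_of_real (d i) else 0)"

lemma diagm_mult: "diagm d ** diagm f = diagm (\<lambda>i. d i * f i)"
proof -
  have "\<And>i j. (\<Sum>k\<in>UNIV. (if i = k then complex_of_real (d i) else 0) * (if k = j then complex_of_real (f k) else 0))
     = (if i = j then complex_of_real (d i * f i) else 0)"
  proof -
    fix i j :: 'a
    have "(\<lambda>k. (if i = k then complex_of_real (d i) else 0) * (if k = j then complex_of_real (f k) else 0))
       = (\<lambda>k. if k = i then (if i = j then complex_of_real (d i * f i) else 0) else 0)"
      by (auto simp: fun_eq_iff)
    then show "?thesis i j" by (simp only:) simp
  qed
  then show ?thesis by (simp add: diagm_def matrix_matrix_mult_def vec_eq_iff)
qed

lemma diagm_one: "diagm (\<lambda>i. 1) = mat 1"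
  by (simp add: diagm_def mat_def vec_eq_iff)

lemma diag_dens:
  assumes pos: "\<And>i. d i > 0" and s: "(\<Sum>i\<in>UNIV. d i) = 1"
  shows "density_matrix (diagm d) \<and> invertible (diagm d)"
proof -
  have adj: "cmat_adj (diagm d) = diagm d"
    by (simp add: cmat_adj_def diagm_def vec_eq_iff)
  have mv: "\<And>v i. (diagm d *v v) $ i = complex_of_real (d i) * v $ i"
  proof -
    fix v :: "complex^'a" and i
    have "(\<lambda>j. (if i = j then complex_of_real (d i) else 0) * v $ j) = (\<lambda>j. if j = i then complex_of_real (d i) * v $ i else 0)"
      by (auto simp: fun_eq_iff)
    then show "(diagm d *v v) $ i = complex_of_real (d i) * v $ i"
      unfolding diagm_def matrix_vector_mult_def vec_lambda_beta by (simp only:) simp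
  qed
  have q: "\<And>v. 0 \<le> Re (\<Sum>i\<in>UNIV. cnj (v$i) * (diagm d *v v)$i)"
  proof -
    fix v :: "complex^'a"
    have "\<And>i. Re (cnj (v$i) * (diagm d *v v)$i) = d i * ((Re (v$i))^2 + (Im (v$i))^2)"
      by (simp add: mv power2_eq_square algebra_simps)
    moreover have "\<And>i. 0 \<le> d i * ((Re (v$i))^2 + (Im (v$i))^2)"
      using pos by (simp add: less_imp_le)
    ultimately show "0 \<le> Re (\<Sum>i\<in>UNIV. cnj (v$i) * (diagm d *v v)$i)"
      by (simp add: Re_sum sum_nonneg)
  qed
  have tr: "trace (diagm d) = 1"
    using s by (simp add: trace_def diagm_def flip: of_real_sum)
  have inv: "invertible (diagm d)"
    unfolding invertible_def
    apply (rule exI[of _ "diagm (\<lambda>i. 1 / d i)"])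
    using pos by (simp add: diagm_mult diagm_one[symmetric] less_imp_neq[symmetric])
  show ?thesis using adj q tr inv by (simp add: density_matrix_def psd_def)
qed

lemma HP_in_ConvSP:
  assumes card: "CARD('n::finite) \<ge> 2" and psi: "\<Psi> \<in> (HP :: (complex^'n^'n \<Rightarrow> complex^'m::finite^'m) set)"
  shows "\<Psi> \<in> Conv SP"
proof -
  obtain a b :: 'n where ab: "a \<noteq> b"
  proof -
    have "\<not> (\<forall>x y::'n. x = y)"
    proof
      assume "\<forall>x y::'n. x = y"
      then have "(UNIV::'n set) \<subseteq> {undefined}" by auto
      then have "CARD('n) \<le> 1" using card_mono[of "{undefined}" UNIV] by simp
      then show False using card by simp
    qed
    then show ?thesis using that by blast
  qed
  define N where "N = real CARD('n)"
  define e where "e = 1 / (N + 1)"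
  have Npos: "N > 0" unfolding N_def by simp
  have epos: "e > 0" unfolding e_def using Npos by simp
  define d1 where "d1 = (\<lambda>i::'n. if i = a then 2 * e else e)"
  define d2 where "d2 = (\<lambda>i::'n. if i = b then 2 * e else e)"
  have sumd: "(\<Sum>i\<in>UNIV. (if i = c then 2 * e else e)) = 1" for c :: 'n
  proof -
    have "(\<Sum>i\<in>UNIV. (if i = c then 2 * e else e)) = (\<Sum>i\<in>UNIV. e + (if i = c then e else 0))"
      by (rule sum.cong) auto
    also have "\<dots> = N * e + e" by (simp add: sum.distrib N_def)
    also have "\<dots> = 1" unfolding e_def using Npos by (simp add: field_simps)
    finally show ?thesis .
  qed
  define \<rho>1 where "\<rho>1 = diagm d1"
  define \<rho>2 where "\<rho>2 = diagm d2"
  have r1: "density_matrix \<rho>1 \<and> invertible \<rho>1"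
    unfolding \<rho>1_def d1_def by (rule diag_dens) (use epos sumd in auto)
  have r2: "density_matrix \<rho>2 \<and> invertible \<rho>2"
    unfolding \<rho>2_def d2_def by (rule diag_dens) (use epos sumd in auto)
  define \<sigma> :: "complex^'m^'m" where "\<sigma> = diagm (\<lambda>i. 1 / real CARD('m))"
  have sg: "density_matrix \<sigma> \<and> invertible \<sigma>"
    unfolding \<sigma>_def by (rule diag_dens) auto
  have psiHP: "complex_linear_map \<Psi>" "hermitian_preserving \<Psi>" "trace_preserving \<Psi>"
    using psi by (auto simp: HP_def)
  have herm: "cmat_adj X = X" if "density_matrix X" for X :: "complex^'k^'k"
    using that by (simp add: density_matrix_def psd_def)
  have trc: "trace X = 1" if "density_matrix X" for X :: "complex^'k^'k"
    using that by (simp add: density_matrix_def)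
  define A1 where "A1 = \<sigma> - \<Psi> \<rho>1"
  define A2 where "A2 = \<Psi> \<rho>2 - \<sigma>"
  have A1h: "cmat_adj A1 = A1" unfolding A1_def
    using psiHP(2) herm[OF sg[THEN conjunct1]] herm[OF r1[THEN conjunct1]]
    by (metis cmat_adj_diff hermitian_preserving_def)
  have A2h: "cmat_adj A2 = A2" unfolding A2_def
    using psiHP(2) herm[OF sg[THEN conjunct1]] herm[OF r2[THEN conjunct1]]
    by (metis cmat_adj_diff hermitian_preserving_def)
  have A1t: "trace A1 = 0" unfolding A1_def
    using psiHP(3) trc[OF sg[THEN conjunct1]] trc[OF r1[THEN conjunct1]]
    by (simp add: trace_sub trace_preserving_def)
  have A2t: "trace A2 = 0" unfolding A2_def
    using psiHP(3) trc[OF sg[THEN conjunct1]] trc[OF r2[THEN conjunct1]]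
    by (simp add: trace_sub trace_preserving_def)
  define h :: "complex^'n^'n \<Rightarrow> complex" where "h = (\<lambda>X. of_real (1/e) * (X$a$a - X$b$b))"
  define g1 where "g1 = (\<lambda>X. of_real (1/2) * (trace X + h X))"
  define g2 where "g2 = (\<lambda>X. of_real (1/2) * (trace X - h X))"
  have hF: "goodF h" unfolding h_def by (intro goodF_real goodF_diff goodF_entry)
  have g1F: "goodF g1" unfolding g1_def by (intro goodF_real goodF_add goodF_trace hF)
  have g2F: "goodF g2" unfolding g2_def by (intro goodF_real goodF_diff goodF_trace hF)
  define D where "D = (\<lambda>X. cmat_scale (g1 X) A1 + cmat_scale (g2 X) A2)"
  have DG: "goodD D" unfolding D_def
    by (intro goodD_add goodD_rank1 g1F g2F A1h A2h A1t A2t)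
  have h1: "h \<rho>1 = 1" unfolding h_def \<rho>1_def diagm_def d1_def using ab epos
    by (simp flip: of_real_diff of_real_mult)
  have h2: "h \<rho>2 = -1" unfolding h_def \<rho>2_def diagm_def d2_def using ab epos
    by (simp flip: of_real_diff of_real_mult)
  have t1: "trace \<rho>1 = 1" and t2: "trace \<rho>2 = 1" using trc r1 r2 by auto
  have g11: "g1 \<rho>1 = 1" "g2 \<rho>1 = 0" unfolding g1_def g2_def using h1 t1 by simp_all
  have g22: "g1 \<rho>2 = 0" "g2 \<rho>2 = 1" unfolding g1_def g2_def using h2 t2 by simp_all
  define P1 where "P1 = (\<lambda>X. \<Psi> X + D X)"
  define P2 where "P2 = (\<lambda>X. \<Psi> X - D X)"
  have P1HP: "P1 \<in> HP" and P2HP: "P2 \<in> HP" unfolding P1_def P2_def using HP_plus[OF psi DG] by auto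
  have "P1 \<rho>1 = \<sigma>" unfolding P1_def D_def A1_def using g11 by (simp add: cmat_scale_1 cmat_scale_0)
  then have P1SP: "P1 \<in> SP" unfolding SP_def using P1HP r1 sg by auto
  have "P2 \<rho>2 = \<sigma>" unfolding P2_def D_def A2_def using g22 by (simp add: cmat_scale_1 cmat_scale_0)
  then have P2SP: "P2 \<in> SP" unfolding SP_def using P2HP r2 sg by auto
  define G where "G = (\<lambda>i::nat. if i = 0 then P1 else P2)"
  have "\<Psi> = (\<lambda>x. \<Sum>i<2. (\<lambda>_. 1/2::real) i *\<^sub>R G i x)"
  proof
    fix x
    have "(\<Sum>i<2. (\<lambda>_. 1/2::real) i *\<^sub>R G i x) = (1/2::real) *\<^sub>R (\<Psi> x + D x) + (1/2::real) *\<^sub>R (\<Psi> x - D x)"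
      by (simp add: numeral_2_eq_2 G_def P1_def P2_def)
    also have "\<dots> = \<Psi> x" by (simp add: scaleR_add_right scaleR_diff_right flip: scaleR_add_left)
    finally show "\<Psi> x = (\<Sum>i<2. (\<lambda>_. 1/2::real) i *\<^sub>R G i x)" by simp
  qed
  moreover have "\<forall>i<2. 0 \<le> (\<lambda>_. 1/2::real) i \<and> G i \<in> SP" using P1SP P2SP by (simp add: G_def)
  moreover have "(\<Sum>i<(2::nat). (\<lambda>_. 1/2::real) i) = 1" by simp
  ultimately have "\<exists>k (c::nat\<Rightarrow>real) g. (\<forall>i<k. 0 \<le> c i \<and> g i \<in> SP) \<and> (\<Sum>i<k. c i) = 1 \<and>
     \<Psi> = (\<lambda>x. \<Sum>i<k. c i *\<^sub>R g i x)"
    by (intro exI[of _ 2] exI[of _ "\<lambda>_. 1/2::real"] exI[of _ G]) (simp only: simp_thms)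
  then show ?thesis by (simp only: Conv_def mem_Collect_eq)
qed

theorem proposition3:
  assumes "CARD('n::finite) \<ge> 2"
  shows "Conv (SP :: (complex^'n^'n \<Rightarrow> complex^'m::finite^'m) set) = HP
       \<and> Conv (SN :: (complex^'n^'n \<Rightarrow> complex^'m^'m) set) = HP"
proof -
  have a: "(SP :: (complex^'n^'n \<Rightarrow> complex^'m^'m) set) \<subseteq> SN" unfolding SP_def SN_def by blast
  have b: "(SN :: (complex^'n^'n \<Rightarrow> complex^'m^'m) set) \<subseteq> HP" unfolding SN_def by blast
  have c: "HP \<subseteq> Conv (SP :: (complex^'n^'n \<Rightarrow> complex^'m^'m) set)"
    using HP_in_ConvSP[OF assms] by blast
  have "Conv (SP :: (complex^'n^'n \<Rightarrow> complex^'m^'m) set) \<subseteq> Conv SN" by (rule Conv_mono[OF a])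
  moreover have "Conv (SN :: (complex^'n^'n \<Rightarrow> complex^'m^'m) set) \<subseteq> HP"
    using Conv_mono[OF b] Conv_HP by blast
  ultimately show ?thesis using c by blast
qed

end
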